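(* Let $0<\theta<\lambda$ and $p\in(0,1)$. For each $N\geq 1$ let $\{\eta_t\}_{t\geq 0}$ be the bias voter model on $\mathbb{T}^N$ with parameters $\lambda,\theta$ and initial distribution $\mu_p$, and let $P^p_{\mathbb{T}^N}$ denote its law. Then for every $t>0$ and every vertex $x$, \[ \lim_{N\to\infty}P^p_{\mathbb{T}^N}(\eta_t(x)=1)=\frac{p e^{(\lambda-\theta)t}}{1-p+p e^{(\lambda-\theta)t}}. \]
   Context: $\mathbb{T}^N$ denotes the infinite regular tree in which every vertex has degree $N+1$. For a connected graph $S$ with finite degrees and constants $\lambda>\theta>0$, the bias voter model on $S$ is the spin system $\{\eta_t\}_{t\ge0}$ on $\{0,1\}^S$ in which the configuration $\eta$ flips at vertex $x$ at rate \[ c(x,\eta)=\begin{cases}\frac{\lambda}{\deg(x)}\sum_{y\sim x}\eta(y) & \text{if } \eta(x)=0,\\ \frac{\theta}{\deg(x)}\sum_{y\sim x}(1-\eta(y)) & \text{if } \eta(x)=1,\end{cases} \] where $y\sim x$ means $y$ is a neighbor of $x$. (Equivalently: a vertex in state $0$, resp. $1$, at rate $\lambda$, resp. $\theta$, picks a uniformly random neighbor and copies its state.) $\mu_p$ denotes the product Bernoulli measure with density $p$ on $\{0,1\}^S$, i.e. $\mu_p(\eta(x)=1\ \forall x\in A)=p^{|A|}$ for finite $A\subseteq S$. *)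

theory Defs
  imports "HOL-Probability.Probability"
begin

text \<open>Vertices of the regular tree T^N (every vertex of degree N+1), encoded as lists of
naturals: the root is [], its N+1 children are [a] with a \<le> N, and every other vertex
xs has the N children xs @ [a] with a < N (and parent butlast xs).\<close>

definition tree_vertices :: "nat \<Rightarrow> nat list set" where
  "tree_vertices N = {xs. (xs \<noteq> [] \<longrightarrow> hd xs \<le> N) \<and> (\<forall>i\<in>{1..<length xs}. xs ! i < N)}"

definition tree_neighbors :: "nat \<Rightarrow> nat list \<Rightarrow> nat list set" where
  "tree_neighbors N x =
     (if x = [] then {} else {butlast x}) \<union> {x @ [a] | a. x @ [a] \<in> tree_vertices N}"

definition config_space :: "nat \<Rightarrow> (nat list \<Rightarrow> bool) measure" where
  "config_space N = PiM (tree_vertices N) (\<lambda>_. count_space UNIV)"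

definition mu_p :: "nat \<Rightarrow> real \<Rightarrow> (nat list \<Rightarrow> bool) measure" where
  "mu_p N p = PiM (tree_vertices N) (\<lambda>_. measure_pmf (bernoulli_pmf p))"

definition bvm_rate :: "nat \<Rightarrow> real \<Rightarrow> real \<Rightarrow> nat list \<Rightarrow> (nat list \<Rightarrow> bool) \<Rightarrow> real" where
  "bvm_rate N lam th x \<eta> =
     (if \<eta> x then th / real (N + 1) * real (card {y \<in> tree_neighbors N x. \<not> \<eta> y})
      else lam / real (N + 1) * real (card {y \<in> tree_neighbors N x. \<eta> y}))"

definition cylinder_fun :: "nat \<Rightarrow> nat list set \<Rightarrow> ((nat list \<Rightarrow> bool) \<Rightarrow> real) \<Rightarrow> bool" where
  "cylinder_fun N A f \<longleftrightarrow> finite A \<and> A \<subseteq> tree_vertices N \<and>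
     (\<forall>\<eta> \<xi>. (\<forall>y\<in>A. \<eta> y = \<xi> y) \<longrightarrow> f \<eta> = f \<xi>)"

text \<open>Generator of the spin system applied to a cylinder function depending on A:
  Lf(eta) = sum_x c(x,eta) (f(eta^x) - f(eta)); only x in A contribute.\<close>

definition bvm_gen :: "nat \<Rightarrow> real \<Rightarrow> real \<Rightarrow> nat list set \<Rightarrow> ((nat list \<Rightarrow> bool) \<Rightarrow> real)
    \<Rightarrow> (nat list \<Rightarrow> bool) \<Rightarrow> real" where
  "bvm_gen N lam th A f \<eta> = (\<Sum>x\<in>A. bvm_rate N lam th x \<eta> * (f (\<eta>(x := \<not> \<eta> x)) - f \<eta>))"

text \<open>nu t is the distribution at time t of the bias voter model on T^N started from mu_p,
characterised by the Kolmogorov forward equation d/dt nu_t(f) = nu_t(Lf) for all cylinder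
functions f (which determines the one-time marginals uniquely, as the rates are bounded).\<close>

definition bvm_marginals :: "nat \<Rightarrow> real \<Rightarrow> real \<Rightarrow> real \<Rightarrow> (real \<Rightarrow> (nat list \<Rightarrow> bool) measure) \<Rightarrow> bool" where
  "bvm_marginals N lam th p \<nu> \<longleftrightarrow>
     (\<forall>t\<ge>0. prob_space (\<nu> t) \<and> sets (\<nu> t) = sets (config_space N)) \<and>
     \<nu> 0 = mu_p N p \<and>
     (\<forall>A f. cylinder_fun N A f \<longrightarrow>
        (\<forall>t\<ge>0. ((\<lambda>s. integral\<^sup>L (\<nu> s) f) has_real_derivative
                   integral\<^sup>L (\<nu> t) (bvm_gen N lam th A f)) (at t within {0..})))"

end

theory Submission
  imports Defs "HOL-Probability.Probability"
begin


fun CC :: "real \<Rightarrow> real \<Rightarrow> nat \<Rightarrow> nat \<Rightarrow> real" where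
  "CC a \<tau> 0 k = 0"
| "CC a \<tau> (Suc n) k = 1 + \<tau> * real k * a * (CC a \<tau> n (k+1) + 1)"

definition RR :: "real \<Rightarrow> nat \<Rightarrow> nat \<Rightarrow> real \<Rightarrow> real" where
  "RR a n k h = pochhammer (real k) n * (a * h)^n / fact n"

lemma CC_nonneg: "0 \<le> a \<Longrightarrow> 0 \<le> \<tau> \<Longrightarrow> 0 \<le> CC a \<tau> n k"
  by (induction n arbitrary: k) auto

lemma RR_nonneg: "0 \<le> a \<Longrightarrow> 0 \<le> h \<Longrightarrow> 0 \<le> RR a n k h"
  unfolding RR_def pochhammer_prod by (intro divide_nonneg_nonneg mult_nonneg_nonneg prod_nonneg) auto

lemma RR_0 [simp]: "RR a 0 k h = 1"
  unfolding RR_def by simp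

lemma RR_Suc_at0: "RR a (Suc n) k 0 = 0"
  unfolding RR_def by simp

lemma RR_deriv:
  "((\<lambda>s. RR a (Suc n) k s) has_real_derivative (real k * a * RR a n (k+1) s)) (at s within S)"
proof -
  have e: "(\<lambda>s. RR a (Suc n) k s) = (\<lambda>s. (pochhammer (real k) (Suc n) / fact (Suc n)) * (a * s)^(Suc n))"
    unfolding RR_def by auto
  have d1: "((\<lambda>s. a * s) has_real_derivative a) (at s within S)"
    by (auto intro!: derivative_eq_intros)
  have "((\<lambda>s. (pochhammer (real k) (Suc n) / fact (Suc n)) * (a * s)^(Suc n)) has_real_derivative
     (pochhammer (real k) (Suc n) / fact (Suc n)) * ((1 + real n) * (a * (a * s)^n))) (at s within S)"
    by (rule DERIV_cmult[OF DERIV_power_Suc[OF d1]])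
  moreover have "(pochhammer (real k) (Suc n) / fact (Suc n)) * ((1 + real n) * (a * (a * s)^n)) = real k * a * RR a n (k+1) s"
    unfolding RR_def pochhammer_rec by (simp add: field_simps del: of_nat_Suc) (simp add: algebra_simps)
  ultimately show ?thesis unfolding e by simp
qed


lemma mono_cmp:
  fixes G F :: "real \<Rightarrow> real"
  assumes h0: "0 \<le> h"
    and dG: "\<And>s. 0 \<le> s \<Longrightarrow> s \<le> h \<Longrightarrow> (G has_real_derivative G' s) (at s within {0..})"
    and dF: "\<And>s. 0 \<le> s \<Longrightarrow> s \<le> h \<Longrightarrow> (F has_real_derivative F' s) (at s within {0..})"
    and b: "\<And>s. 0 < s \<Longrightarrow> s < h \<Longrightarrow> \<bar>G' s\<bar> \<le> F' s"
  shows "\<bar>G h\<bar> \<le> \<bar>G 0\<bar> + F h - F 0"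
proof -
  have cont: "continuous_on {0..h} H" if dH: "\<And>s. 0 \<le> s \<Longrightarrow> s \<le> h \<Longrightarrow> (H has_real_derivative H' s) (at s within {0..})"
    for H :: "real \<Rightarrow> real" and H'
  proof -
    have "continuous (at s within {0..h}) H" if "s \<in> {0..h}" for s
    proof -
      have "(H has_real_derivative H' s) (at s within {0..h})"
        using dH[of s] that by (auto intro: DERIV_subset)
      then show ?thesis by (rule DERIV_continuous)
    qed
    then show ?thesis using continuous_on_eq_continuous_within by blast
  qed
  have atd: "(H has_real_derivative D) (at s)" if "(H has_real_derivative D) (at s within {0..})" "0 < s"
    for H :: "real \<Rightarrow> real" and D s
  proof -
    have "(H has_real_derivative D) (at s within {0<..})"
      using that by (auto intro: DERIV_subset)
    moreover have "at s within {0<..} = at s" using that by (intro at_within_open) auto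
    ultimately show ?thesis by simp
  qed
  have dm: "\<And>s. 0 \<le> s \<Longrightarrow> s \<le> h \<Longrightarrow> ((\<lambda>s. F s - G s) has_real_derivative F' s - G' s) (at s within {0..})"
    using dF dG by (auto intro!: derivative_eq_intros)
  have dp: "\<And>s. 0 \<le> s \<Longrightarrow> s \<le> h \<Longrightarrow> ((\<lambda>s. F s + G s) has_real_derivative F' s + G' s) (at s within {0..})"
    using dF dG by (auto intro!: derivative_eq_intros)
  have "(\<lambda>s. F s - G s) 0 \<le> (\<lambda>s. F s - G s) h"
    apply (rule DERIV_nonneg_imp_increasing_open[where f="\<lambda>s. F s - G s"])
    using h0 apply simp
    subgoal for x apply (rule exI[of _ "F' x - G' x"]) using atd[OF dm[of x], of] b[of x] by auto
    using cont[OF dm] by simp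
  moreover have "(\<lambda>s. F s + G s) 0 \<le> (\<lambda>s. F s + G s) h"
    apply (rule DERIV_nonneg_imp_increasing_open[where f="\<lambda>s. F s + G s"])
    using h0 apply simp
    subgoal for x apply (rule exI[of _ "F' x + G' x"]) using atd[OF dp[of x], of] b[of x] by auto
    using cont[OF dp] by simp
  ultimately show ?thesis by simp
qed


lemma shift_deriv:
  assumes "0 \<le> s0" "0 \<le> s" and "(H has_real_derivative D) (at (s0 + s) within {0..})"
  shows "((\<lambda>s. H (s0 + s)) has_real_derivative D) (at s within {0..})"
proof -
  have "(H has_real_derivative D) (at ((\<lambda>s. s0 + s) s) within ((\<lambda>s. s0 + s) ` {0..}))"
    using assms by (auto intro: DERIV_subset)
  moreover have "((\<lambda>s. s0 + s) has_real_derivative 1) (at s within {0..})"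
    by (auto intro!: derivative_eq_intros)
  ultimately have "(H \<circ> (\<lambda>s. s0 + s) has_real_derivative D * 1) (at s within {0..})"
    by (rule DERIV_image_chain)
  then show ?thesis by (simp add: o_def)
qed

lemma local_bound:
  fixes g g' :: "'b set \<Rightarrow> real \<Rightarrow> real" and Bs :: "'b set set"
  assumes a0: "0 < a" and tau0: "0 \<le> \<tau>" and s0: "0 \<le> s0" and e0: "0 \<le> e" and gam0: "0 \<le> \<gamma>"
    and bnd1: "\<And>B t. B \<in> Bs \<Longrightarrow> 0 \<le> t \<Longrightarrow> \<bar>g B t\<bar> \<le> 1"
    and der: "\<And>B t. B \<in> Bs \<Longrightarrow> 0 \<le> t \<Longrightarrow> (g B has_real_derivative g' B t) (at t within {0..})"
    and dbnd: "\<And>B t M. B \<in> Bs \<Longrightarrow> 0 \<le> t \<Longrightarrow>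
        (\<And>B'. B' \<in> Bs \<Longrightarrow> card B' \<le> card B + 1 \<Longrightarrow> \<bar>g B' t\<bar> \<le> M) \<Longrightarrow>
        \<bar>g' B t\<bar> \<le> real (card B) * a * (M + e * real (card B))"
    and init: "\<And>B. B \<in> Bs \<Longrightarrow> card B \<le> K \<Longrightarrow> \<bar>g B s0\<bar> \<le> \<gamma>"
    and eK: "e * real K \<le> \<gamma>"
  shows "k + n \<le> K \<Longrightarrow> B \<in> Bs \<Longrightarrow> card B \<le> k \<Longrightarrow> 0 \<le> h \<Longrightarrow> h \<le> \<tau> \<Longrightarrow>
     \<bar>g B (s0 + h)\<bar> \<le> \<gamma> * CC a \<tau> n k + RR a n k h"
proof (induction n arbitrary: k B h)
  case 0
  then show ?case using bnd1[of B "s0 + h"] s0 by simp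
next
  case (Suc n k B h)
  define Cn where "Cn = CC a \<tau> n (k+1)"
  have Cn0: "0 \<le> Cn" using CC_nonneg a0 tau0 by (simp add: Cn_def)
  have IH: "\<bar>g B' (s0 + s)\<bar> \<le> \<gamma> * Cn + RR a n (k+1) s"
    if "B' \<in> Bs" "card B' \<le> k + 1" "0 \<le> s" "s \<le> \<tau>" for B' s
    using Suc.IH[of "k+1" B' s] Suc.prems(1) that Cn_def by auto
  define F where "F = (\<lambda>s. s * (real k * a * (\<gamma> * Cn + e * real k)) + RR a (Suc n) k s)"
  define F' where "F' = (\<lambda>s. real k * a * (\<gamma> * Cn + e * real k) + real k * a * RR a n (k+1) s)"
  have dF: "(F has_real_derivative F' s) (at s within {0..})" for s
    unfolding F_def F'_def
    by (rule derivative_eq_intros RR_deriv refl)+ simp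
  have dG: "((\<lambda>s. g B (s0 + s)) has_real_derivative g' B (s0 + s)) (at s within {0..})"
    if "0 \<le> s" for s
    using shift_deriv[OF s0 that der[of B "s0 + s"]] Suc.prems(2) s0 that by simp
  have bd: "\<bar>g' B (s0 + s)\<bar> \<le> F' s" if "0 < s" "s < h" for s
  proof -
    define M where "M = \<gamma> * Cn + RR a n (k+1) s"
    have M0: "0 \<le> M" unfolding M_def using gam0 Cn0 RR_nonneg[of a s n "k+1"] a0 that by simp
    have "\<bar>g' B (s0 + s)\<bar> \<le> real (card B) * a * (M + e * real (card B))"
      apply (rule dbnd)
      using Suc.prems(2) s0 that apply simp_all
      using IH Suc.prems(3,5) that M_def by force
    also have "\<dots> \<le> real k * a * (M + e * real k)"
      using Suc.prems(3) a0 e0 M0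
      by (intro mult_mono add_mono order_refl) (auto intro: mult_nonneg_nonneg)
    finally show ?thesis unfolding F'_def M_def by (simp add: algebra_simps)
  qed
  have main: "\<bar>g B (s0 + h)\<bar> \<le> \<bar>g B (s0 + 0)\<bar> + F h - F 0"
    by (rule mono_cmp[where G="\<lambda>s. g B (s0 + s)" and F=F and G'="\<lambda>s. g' B (s0 + s)" and F'=F'])
      (use Suc.prems(4) dG dF bd in auto)
  have F0: "F 0 = 0" unfolding F_def by (simp add: RR_Suc_at0)
  have g0: "\<bar>g B (s0 + 0)\<bar> \<le> \<gamma>" using init[of B] Suc.prems by simp
  have ek: "e * real k \<le> \<gamma>"
    using eK e0 Suc.prems(1) by (meson add_leE mult_left_mono of_nat_le_iff order_trans)
  have "h * (real k * a * (\<gamma> * Cn + e * real k)) \<le> \<tau> * (real k * a * (\<gamma> * Cn + \<gamma>))"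
    using Suc.prems(4,5) ek a0 gam0 Cn0 e0
    by (intro mult_mono mult_left_mono add_mono order_refl) (auto intro!: mult_nonneg_nonneg add_nonneg_nonneg)
  then have "F h \<le> \<tau> * (real k * a * (\<gamma> * Cn + \<gamma>)) + RR a (Suc n) k h"
    unfolding F_def by simp
  with main F0 g0 have "\<bar>g B (s0 + h)\<bar> \<le> \<gamma> + \<tau> * (real k * a * (\<gamma> * Cn + \<gamma>)) + RR a (Suc n) k h"
    by simp
  also have "\<dots> = \<gamma> * CC a \<tau> (Suc n) k + RR a (Suc n) k h"
    by (simp add: Cn_def algebra_simps)
  finally show ?case .
qed


lemma RR_mono: "0 \<le> a \<Longrightarrow> 0 \<le> h \<Longrightarrow> h \<le> \<tau> \<Longrightarrow> RR a n k h \<le> RR a n k \<tau>"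
  unfolding RR_def pochhammer_prod
  by (intro divide_right_mono mult_left_mono power_mono mult_left_mono prod_nonneg) auto

lemma RR_lim:
  assumes "0 < a" "0 \<le> \<tau>" "a * \<tau> \<le> 1/4"
  shows "(\<lambda>n. RR a n k \<tau>) \<longlonglongrightarrow> 0"
proof -
  have "summable (\<lambda>n. RR a n k \<tau>)"
  proof (rule summable_ratio_test[of "1/2" k])
    fix n assume n: "n \<ge> k"
    have nn: "0 \<le> RR a n k \<tau>" using RR_nonneg assms by simp
    have eq: "RR a (Suc n) k \<tau> = RR a n k \<tau> * ((real k + real n) * (a * \<tau>) / (real n + 1))"
      unfolding RR_def pochhammer_rec' by (simp add: field_simps)
    have "(real k + real n) * (a * \<tau>) / (real n + 1) \<le> 1/2"
    proof -
      have "(real k + real n) * (a * \<tau>) \<le> (2 * (real n + 1)) * (1/4)"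
        using n assms by (intro mult_mono) auto
      then show ?thesis by (simp add: field_simps)
    qed
    then have "RR a (Suc n) k \<tau> \<le> RR a n k \<tau> * (1/2)"
      unfolding eq using nn by (intro mult_left_mono) auto
    moreover have "0 \<le> RR a (Suc n) k \<tau>" using RR_nonneg assms by simp
    ultimately show "norm (RR a (Suc n) k \<tau>) \<le> 1/2 * norm (RR a n k \<tau>)"
      using nn by simp
  qed simp
  then show ?thesis by (rule summable_LIMSEQ_zero)
qed

lemma global_small:
  fixes g g' :: "nat \<Rightarrow> 'b set \<Rightarrow> real \<Rightarrow> real" and Bs :: "nat \<Rightarrow> 'b set set" and e :: "nat \<Rightarrow> real"
  assumes a0: "0 < a" and e0: "\<And>N. 0 \<le> e N" and elim: "e \<longlonglongrightarrow> 0"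
    and bnd1: "\<And>N B t. N \<ge> 1 \<Longrightarrow> B \<in> Bs N \<Longrightarrow> 0 \<le> t \<Longrightarrow> \<bar>g N B t\<bar> \<le> 1"
    and der: "\<And>N B t. N \<ge> 1 \<Longrightarrow> B \<in> Bs N \<Longrightarrow> 0 \<le> t \<Longrightarrow>
        (g N B has_real_derivative g' N B t) (at t within {0..})"
    and dbnd: "\<And>N B t M. N \<ge> 1 \<Longrightarrow> B \<in> Bs N \<Longrightarrow> 0 \<le> t \<Longrightarrow>
        (\<And>B'. B' \<in> Bs N \<Longrightarrow> card B' \<le> card B + 1 \<Longrightarrow> \<bar>g N B' t\<bar> \<le> M) \<Longrightarrow>
        \<bar>g' N B t\<bar> \<le> real (card B) * a * (M + e N * real (card B))"
    and init0: "\<And>N B. N \<ge> 1 \<Longrightarrow> B \<in> Bs N \<Longrightarrow> g N B 0 = 0"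
    and t0: "0 \<le> t"
  shows "\<forall>k. \<forall>\<epsilon>>0. eventually (\<lambda>N. \<forall>B\<in>Bs N. card B \<le> k \<longrightarrow> \<bar>g N B t\<bar> \<le> \<epsilon>) sequentially"
proof -
  define Small where "Small t \<longleftrightarrow> (\<forall>k. \<forall>\<epsilon>>0. eventually (\<lambda>N. \<forall>B\<in>Bs N. card B \<le> k \<longrightarrow> \<bar>g N B t\<bar> \<le> \<epsilon>) sequentially)" for t
  define \<tau> where "\<tau> = 1 / (4 * a)"
  have tau0: "0 < \<tau>" using a0 by (simp add: \<tau>_def)
  have atau: "a * \<tau> \<le> 1/4" using a0 by (simp add: \<tau>_def)
  have step: "Small (s0 + h)" if S0: "Small s0" and s0: "0 \<le> s0" and h: "0 \<le> h" "h \<le> \<tau>" for s0 h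
    unfolding Small_def
  proof (intro allI impI)
    fix k :: nat and \<epsilon> :: real assume \<epsilon>: "0 < \<epsilon>"
    have "eventually (\<lambda>n. RR a n k \<tau> < \<epsilon>/2) sequentially"
      using RR_lim[OF a0 _ atau, of k] tau0 \<epsilon> by (intro order_tendstoD(2)) auto
    then obtain n where n: "RR a n k \<tau> < \<epsilon>/2" by (auto simp: eventually_sequentially)
    define C where "C = CC a \<tau> n k"
    have C0: "0 \<le> C" unfolding C_def using CC_nonneg a0 tau0 by simp
    define \<gamma> where "\<gamma> = \<epsilon> / (2 * (C + 1))"
    have gam0: "0 < \<gamma>" unfolding \<gamma>_def using \<epsilon> C0 by simp
    have gC: "\<gamma> * C \<le> \<epsilon> / 2"
    proof -
      have "\<gamma> * C = (\<epsilon>/2) * (C / (C + 1))" unfolding \<gamma>_def by (simp add: field_simps)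
      also have "\<dots> \<le> (\<epsilon>/2) * 1" using C0 \<epsilon> by (intro mult_left_mono) auto
      finally show ?thesis by simp
    qed
    define K where "K = k + n"
    have ev1: "eventually (\<lambda>N. \<forall>B\<in>Bs N. card B \<le> K \<longrightarrow> \<bar>g N B s0\<bar> \<le> \<gamma>) sequentially"
      using S0 gam0 unfolding Small_def by blast
    have ev2: "eventually (\<lambda>N. e N < \<gamma> / (real K + 1)) sequentially"
      using elim gam0 by (intro order_tendstoD(2)) auto
    have ev3: "eventually (\<lambda>N. N \<ge> 1) sequentially" by (rule eventually_ge_at_top)
    show "eventually (\<lambda>N. \<forall>B\<in>Bs N. card B \<le> k \<longrightarrow> \<bar>g N B (s0 + h)\<bar> \<le> \<epsilon>) sequentially"
      using ev1 ev2 ev3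
    proof eventually_elim
      case (elim N)
      have eK: "e N * real K \<le> \<gamma>"
      proof -
        have "e N * real K \<le> \<gamma> / (real K + 1) * real K"
          using elim(2) e0[of N] by (intro mult_right_mono) auto
        also have "\<dots> \<le> \<gamma>" using gam0 by (simp add: field_simps)
        finally show ?thesis .
      qed
      show ?case
      proof (intro ballI impI)
        fix B assume B: "B \<in> Bs N" "card B \<le> k"
        have "\<bar>g N B (s0 + h)\<bar> \<le> \<gamma> * CC a \<tau> n k + RR a n k h"
          apply (rule local_bound[where g="g N" and g'="g' N" and Bs="Bs N" and e="e N" and K=K])
          using a0 tau0 s0 e0 gam0 bnd1 der dbnd elim eK B h K_def by auto
        also have "\<dots> \<le> \<epsilon>/2 + \<epsilon>/2"
          using gC RR_mono[of a h \<tau> n k] a0 h n unfolding C_def by (intro add_mono) auto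
        finally show "\<bar>g N B (s0 + h)\<bar> \<le> \<epsilon>" by simp
      qed
    qed
  qed
  have S00: "Small 0" unfolding Small_def
  proof (intro allI impI)
    fix k :: nat and \<epsilon> :: real assume ep: "0 < \<epsilon>"
    show "eventually (\<lambda>N. \<forall>B\<in>Bs N. card B \<le> k \<longrightarrow> \<bar>g N B 0\<bar> \<le> \<epsilon>) sequentially"
      apply (rule eventually_mono[OF eventually_ge_at_top[of 1]])
      using ep by (auto simp: init0)
  qed
  have allm: "\<forall>t. 0 \<le> t \<and> t \<le> real m * \<tau> \<longrightarrow> Small t" for m
  proof (induction m)
    case 0
    show ?case using S00 by (metis antisym mult_zero_left of_nat_0)
  next
    case (Suc m)
    show ?case
    proof (intro allI impI)
      fix t assume t: "0 \<le> t \<and> t \<le> real (Suc m) * \<tau>"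
      show "Small t"
      proof (cases "t \<le> real m * \<tau>")
        case True then show ?thesis using Suc.IH t by blast
      next
        case False
        have "Small (real m * \<tau> + (t - real m * \<tau>))"
          apply (rule step)
          using Suc.IH tau0 False t by (auto simp: algebra_simps)
        then show ?thesis by simp
      qed
    qed
  qed
  define m where "m = nat \<lceil>t / \<tau>\<rceil>"
  have "t / \<tau> \<le> real m" unfolding m_def by linarith
  then have "t \<le> real m * \<tau>" using tau0 by (simp add: field_simps)
  then have "Small t" using allm t0 by blast
  then show ?thesis unfolding Small_def .
qed



lemma tv_cons_iff:
  assumes "x \<in> tree_vertices N" "x \<noteq> []"
  shows "x @ [a] \<in> tree_vertices N \<longleftrightarrow> a < N"
proof -
  have "(x @ [a]) ! length x = a" by simp
  moreover have "length x \<in> {1..<length (x @ [a])}" using assms(2) by (cases x) auto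
  ultimately have "x @ [a] \<in> tree_vertices N \<Longrightarrow> a < N"
    unfolding tree_vertices_def by force
  moreover have "a < N \<Longrightarrow> x @ [a] \<in> tree_vertices N"
    using assms unfolding tree_vertices_def
    by (auto simp: nth_append hd_append less_Suc_eq_le)
  ultimately show ?thesis by blast
qed

lemma butlast_tv:
  assumes "x \<in> tree_vertices N"
  shows "butlast x \<in> tree_vertices N"
  using assms unfolding tree_vertices_def
  by (cases x rule: rev_cases) (auto simp: nth_append hd_append split: if_splits)

lemma nb_nil: "tree_neighbors N [] = (\<lambda>a. [a]) ` {..N}"
  unfolding tree_neighbors_def tree_vertices_def by auto

lemma nb_cons:
  assumes "x \<in> tree_vertices N" "x \<noteq> []"
  shows "tree_neighbors N x = insert (butlast x) ((\<lambda>a. x @ [a]) ` {..<N})"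
  using assms tv_cons_iff[OF assms] unfolding tree_neighbors_def by auto

lemma nb_sub: "x \<in> tree_vertices N \<Longrightarrow> tree_neighbors N x \<subseteq> tree_vertices N"
  using butlast_tv unfolding tree_neighbors_def by auto

lemma nb_finite: "x \<in> tree_vertices N \<Longrightarrow> finite (tree_neighbors N x)"
  by (cases "x = []") (auto simp: nb_nil nb_cons)

lemma nb_card: "x \<in> tree_vertices N \<Longrightarrow> card (tree_neighbors N x) = N + 1"
proof (cases "x = []")
  case True
  then show ?thesis by (simp add: nb_nil card_image inj_on_def)
next
  case False
  assume x: "x \<in> tree_vertices N"
  have "butlast x \<notin> (\<lambda>a. x @ [a]) ` {..<N}"
    using False by (auto dest: arg_cong[of _ _ length])
  then show ?thesis using x False by (simp add: nb_cons card_image inj_on_def)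
qed


definition indp :: "nat list set \<Rightarrow> (nat list \<Rightarrow> bool) \<Rightarrow> real" where
  "indp C \<eta> = (\<Prod>z\<in>C. if \<eta> z then 1 else 0)"

lemma indp_insert: "finite C \<Longrightarrow> indp (insert y C) \<eta> = (if \<eta> y then 1 else 0) * indp C \<eta>"
  unfolding indp_def by (cases "y \<in> C") (auto simp: insert_absorb prod.remove)

lemma indp_remove: "finite C \<Longrightarrow> x \<in> C \<Longrightarrow> indp C \<eta> = (if \<eta> x then 1 else 0) * indp (C - {x}) \<eta>"
  using indp_insert[of "C - {x}" x \<eta>] by (simp add: insert_absorb)

lemma indp_upd: "indp (C - {x}) (\<eta>(x := v)) = indp (C - {x}) \<eta>"
  unfolding indp_def by (intro prod.cong) auto

lemma indp_01: "0 \<le> indp C \<eta>" "indp C \<eta> \<le> 1"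
  unfolding indp_def by (auto intro: prod_nonneg prod_le_1)

lemma indp_cyl: "finite C \<Longrightarrow> C \<subseteq> tree_vertices N \<Longrightarrow> cylinder_fun N C (indp C)"
  unfolding cylinder_fun_def indp_def by auto

lemma indp_meas:
  assumes "C \<subseteq> tree_vertices N"
  shows "indp C \<in> borel_measurable (config_space N)"
proof -
  have "(\<lambda>\<eta>. if \<eta> z then 1 else 0 :: real) \<in> borel_measurable (config_space N)" if "z \<in> C" for z
  proof -
    have "(\<lambda>\<eta>. \<eta> z) \<in> measurable (config_space N) (count_space UNIV)"
      unfolding config_space_def using that assms by (intro measurable_component_singleton) auto
    moreover have "(\<lambda>b::bool. if b then 1 else 0 :: real) \<in> measurable (count_space UNIV) borel"
      by simp
    ultimately show ?thesis using measurable_compose by fastforce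
  qed
  then show ?thesis unfolding indp_def by (intro borel_measurable_prod) auto
qed

lemma rate_term:
  assumes B: "finite B" "x \<in> B" and nbf: "finite (tree_neighbors N x)" and nbc: "card (tree_neighbors N x) = N + 1"
  shows "bvm_rate N lam th x \<eta> * (indp B (\<eta>(x := \<not> \<eta> x)) - indp B \<eta>) =
    (\<Sum>y\<in>tree_neighbors N x. (1 / real (N+1)) * (lam * (indp (insert y (B - {x})) \<eta> - indp (insert y B) \<eta>)
       - th * (indp B \<eta> - indp (insert y B) \<eta>)))"
proof -
  let ?S = "tree_neighbors N x"
  define R where "R = indp (B - {x}) \<eta>"
  have e1: "indp B \<eta> = (if \<eta> x then 1 else 0) * R" unfolding R_def using indp_remove[OF B] .
  have e2: "indp B (\<eta>(x := v)) = (if v then 1 else 0) * R" for v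
    unfolding R_def using indp_remove[OF B, of "\<eta>(x := v)"] indp_upd by simp
  have e3: "indp (insert y B) \<eta> = (if \<eta> y then 1 else 0) * ((if \<eta> x then 1 else 0) * R)" for y
    using indp_insert[OF B(1)] e1 by simp
  have e4: "indp (insert y (B - {x})) \<eta> = (if \<eta> y then 1 else 0) * R" for y
    using indp_insert[of "B - {x}"] B R_def by simp
  have cs: "(\<Sum>y\<in>?S. if P y then c else 0) = real (card {y\<in>?S. P y}) * c" for P and c :: real
    using sum.inter_filter[OF nbf, of "\<lambda>_. c" P] by simp
  show ?thesis
  proof (cases "\<eta> x")
    case True
    have "(\<Sum>y\<in>?S. (1 / real (N+1)) * (lam * (indp (insert y (B - {x})) \<eta> - indp (insert y B) \<eta>)
       - th * (indp B \<eta> - indp (insert y B) \<eta>))) = (\<Sum>y\<in>?S. if \<not> \<eta> y then - (th / real (N+1) * R) else 0)"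
      by (intro sum.cong) (auto simp: e1 e3 e4 True)
    also have "\<dots> = bvm_rate N lam th x \<eta> * (indp B (\<eta>(x := \<not> \<eta> x)) - indp B \<eta>)"
      unfolding cs bvm_rate_def using True e1 e2 by simp
    finally show ?thesis by simp
  next
    case False
    have "(\<Sum>y\<in>?S. (1 / real (N+1)) * (lam * (indp (insert y (B - {x})) \<eta> - indp (insert y B) \<eta>)
       - th * (indp B \<eta> - indp (insert y B) \<eta>))) = (\<Sum>y\<in>?S. if \<eta> y then lam / real (N+1) * R else 0)"
      by (intro sum.cong) (auto simp: e1 e3 e4 False)
    also have "\<dots> = bvm_rate N lam th x \<eta> * (indp B (\<eta>(x := \<not> \<eta> x)) - indp B \<eta>)"
      unfolding cs bvm_rate_def using False e1 e2 by simp
    finally show ?thesis by simp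
  qed
qed


lemma indp_int:
  assumes "prob_space M" "sets M = sets (config_space N)" "C \<subseteq> tree_vertices N"
  shows "integrable M (indp C)"
proof -
  interpret prob_space M by fact
  have "indp C \<in> borel_measurable M"
    by (subst measurable_cong_sets[OF assms(2) refl]) (rule indp_meas[OF assms(3)])
  then show ?thesis
    by (intro integrable_const_bound[where B=1]) (auto simp: indp_01 abs_le_iff intro: order_trans[OF _ zero_le_one])
qed

lemma indp_int01:
  assumes "prob_space M" "sets M = sets (config_space N)" "C \<subseteq> tree_vertices N"
  shows "0 \<le> integral\<^sup>L M (indp C)" "integral\<^sup>L M (indp C) \<le> 1"
proof -
  interpret prob_space M by fact
  show "0 \<le> integral\<^sup>L M (indp C)" by (intro integral_nonneg_AE) (auto simp: indp_01)
  have "integral\<^sup>L M (indp C) \<le> integral\<^sup>L M (\<lambda>_. 1)"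
    by (intro integral_mono indp_int[OF assms]) (auto simp: indp_01)
  then show "integral\<^sup>L M (indp C) \<le> 1" by (simp add: prob_space)
qed

lemma gen_int:
  assumes M: "prob_space M" "sets M = sets (config_space N)"
    and B: "finite B" "B \<subseteq> tree_vertices N"
  shows "integral\<^sup>L M (bvm_gen N lam th B (indp B)) =
    (\<Sum>x\<in>B. \<Sum>y\<in>tree_neighbors N x. (1 / real (N+1)) *
       (lam * (integral\<^sup>L M (indp (insert y (B - {x}))) - integral\<^sup>L M (indp (insert y B)))
       - th * (integral\<^sup>L M (indp B) - integral\<^sup>L M (indp (insert y B)))))"
proof -
  have xV: "x \<in> tree_vertices N" if "x \<in> B" for x using that B by auto
  have eq: "bvm_gen N lam th B (indp B) = (\<lambda>\<eta>. \<Sum>x\<in>B. \<Sum>y\<in>tree_neighbors N x. (1 / real (N+1)) *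
       (lam * (indp (insert y (B - {x})) \<eta> - indp (insert y B) \<eta>)
       - th * (indp B \<eta> - indp (insert y B) \<eta>)))"
    unfolding bvm_gen_def
    by (intro ext sum.cong refl rate_term) (use B xV nb_finite nb_card in auto)
  have I: "integrable M (indp C)" if "C \<subseteq> tree_vertices N" for C using indp_int[OF M that] .
  have sub: "insert y (B - {x}) \<subseteq> tree_vertices N" "insert y B \<subseteq> tree_vertices N"
    if "x \<in> B" "y \<in> tree_neighbors N x" for x y
    using that B nb_sub[OF xV[OF that(1)]] by auto
  show ?thesis unfolding eq
    apply (subst Bochner_Integration.integral_sum)
     apply (use I sub B in \<open>auto\<close>)[1]
    apply (intro sum.cong refl)
    apply (subst Bochner_Integration.integral_sum)
     apply (use I sub B in \<open>auto\<close>)[1]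
    apply (intro sum.cong refl)
    apply (subst integral_mult_right_zero)
    apply (subst Bochner_Integration.integral_diff)
      apply (use I sub B in \<open>auto\<close>)[2]
    apply (subst integral_mult_right_zero)+
    apply (subst Bochner_Integration.integral_diff, (use I sub B in \<open>auto\<close>)[2])+
    apply simp
    done
qed


lemma indp_if: "finite C \<Longrightarrow> indp C \<eta> = (if \<forall>z\<in>C. \<eta> z then 1 else 0)"
  unfolding indp_def by (induction C rule: finite_induct) auto

lemma init_mu:
  assumes p: "0 \<le> p" "p \<le> 1" and B: "finite B" "B \<subseteq> tree_vertices N"
  shows "integral\<^sup>L (mu_p N p) (indp B) = p ^ card B"
proof -
  let ?M = "\<lambda>_::nat list. measure_pmf (bernoulli_pmf p)"
  let ?S = "prod_emb (tree_vertices N) ?M B (\<Pi>\<^sub>E z\<in>B. {True})"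
  have Ssets: "?S \<in> sets (mu_p N p)"
    unfolding mu_p_def using B by (intro sets_PiM_I) auto
  have eqi: "indp B \<eta> = indicator ?S \<eta>" if "\<eta> \<in> space (mu_p N p)" for \<eta>
    using that B unfolding mu_p_def indp_if[OF B(1)]
    by (auto simp: prod_emb_def space_PiM PiE_iff indicator_def) (metis restrict_apply')
  have "integral\<^sup>L (mu_p N p) (indp B) = integral\<^sup>L (mu_p N p) (indicator ?S)"
    by (intro Bochner_Integration.integral_cong refl eqi)
  also have "\<dots> = measure (mu_p N p) ?S"
    using Ssets by (simp add: Int_absorb2 sets.sets_into_space)
  also have "emeasure (mu_p N p) ?S = (\<Prod>z\<in>B. emeasure (?M z) {True})"
    unfolding mu_p_def using B by (intro emeasure_PiM_emb) (auto simp: prob_space_measure_pmf)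
  then have "measure (mu_p N p) ?S = enn2real (\<Prod>z\<in>B. ennreal p)"
    by (simp add: measure_def emeasure_pmf_single p)
  also have "\<dots> = p ^ card B"
    using p by (simp only: prod_constant, subst ennreal_power) auto
  finally show ?thesis .
qed

lemma final_meas:
  assumes "prob_space M" "sets M = sets (config_space N)" "x \<in> tree_vertices N"
  shows "measure M {\<eta> \<in> space M. \<eta> x = True} = integral\<^sup>L M (indp {x})"
proof -
  let ?A = "{\<eta> \<in> space M. \<eta> x = True}"
  have mc: "(\<lambda>\<eta>. \<eta> x) \<in> measurable M (count_space UNIV)"
    by (subst measurable_cong_sets[OF assms(2) refl])
      (unfold config_space_def, rule measurable_component_singleton, rule assms(3))
  have "?A = (\<lambda>\<eta>. \<eta> x) -` {True} \<inter> space M" by auto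
  then have As: "?A \<in> sets M" using measurable_sets[OF mc, of "{True}"] by simp
  have "integral\<^sup>L M (indp {x}) = integral\<^sup>L M (indicator ?A)"
    by (intro Bochner_Integration.integral_cong refl) (auto simp: indp_def indicator_def)
  also have "\<dots> = measure M ?A"
    using As by (simp add: Int_absorb2 sets.sets_into_space)
  finally show ?thesis by simp
qed



definition lg :: "real \<Rightarrow> real \<Rightarrow> real \<Rightarrow> real" where
  "lg p c t = p * exp (c * t) / (1 - p + p * exp (c * t))"

lemma lg_den: "0 < (p::real) \<Longrightarrow> p < 1 \<Longrightarrow> 0 < 1 - p + p * exp (c * t)"
proof -
  assume a: "0 < p" "p < 1"
  then have "0 < p * exp (c * t)" by simp
  then show ?thesis using a by linarith
qed

lemma lg_01: assumes "0 < p" "p < 1" shows "0 \<le> lg p c t" "lg p c t \<le> 1"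
proof -
  have d: "0 < 1 - p + p * exp (c * t)" using lg_den assms .
  show "0 \<le> lg p c t" unfolding lg_def using d assms by (intro divide_nonneg_pos) auto
  show "lg p c t \<le> 1" unfolding lg_def using d assms by (simp add: divide_le_eq_1)
qed

lemma lg_0: "lg p c 0 = p" unfolding lg_def by simp

lemma lg_deriv:
  assumes "0 < p" "p < 1"
  shows "(lg p c has_real_derivative c * lg p c t * (1 - lg p c t)) (at t within S)"
proof -
  define D where "D = 1 - p + p * exp (c * t)"
  have d: "0 < D" unfolding D_def using lg_den assms .
  have "((\<lambda>t. p * exp (c * t) / (1 - p + p * exp (c * t))) has_real_derivative
     ((p * (exp (c * t) * c)) * D - p * exp (c * t) * (p * (exp (c * t) * c))) / (D * D)) (at t within S)"
    unfolding D_def using d[unfolded D_def]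
    by (auto intro!: derivative_eq_intros)
  moreover have "((p * (exp (c * t) * c)) * D - p * exp (c * t) * (p * (exp (c * t) * c))) / (D * D)
      = c * lg p c t * (1 - lg p c t)"
    unfolding lg_def D_def[symmetric] using d by (simp add: field_simps)
  ultimately show ?thesis unfolding lg_def[abs_def] by simp
qed

lemma lgk_deriv:
  assumes "0 < p" "p < 1"
  shows "((\<lambda>t. lg p c t ^ k) has_real_derivative real k * c * lg p c t ^ k * (1 - lg p c t)) (at t within S)"
proof -
  have "((\<lambda>t. lg p c t ^ k) has_real_derivative of_nat k * ((c * lg p c t * (1 - lg p c t)) * lg p c t ^ (k - Suc 0))) (at t within S)"
    by (rule DERIV_power[OF lg_deriv[OF assms]])
  moreover have "of_nat k * ((c * lg p c t * (1 - lg p c t)) * lg p c t ^ (k - Suc 0)) = real k * c * lg p c t ^ k * (1 - lg p c t)"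
    by (cases k) (auto simp: algebra_simps)
  ultimately show ?thesis by simp
qed


lemma pow_diff_le1: "0 \<le> (u::real) \<Longrightarrow> u \<le> 1 \<Longrightarrow> \<bar>u ^ i - u ^ j\<bar> \<le> 1"
  using power_le_one[of u i] power_le_one[of u j] zero_le_power[of u i] zero_le_power[of u j] by linarith

lemma dbnd_lemma:
  fixes M :: "(nat list \<Rightarrow> bool) measure"
  assumes M: "prob_space M" "sets M = sets (config_space N)"
    and lt: "0 < th" "th < lam" and u: "0 \<le> u" "u \<le> 1"
    and B: "finite B" "B \<subseteq> tree_vertices N"
    and Mb: "\<And>B'. B' \<in> {B. finite B \<and> B \<subseteq> tree_vertices N} \<Longrightarrow> card B' \<le> card B + 1 \<Longrightarrow>
       \<bar>integral\<^sup>L M (indp B') - u ^ card B'\<bar> \<le> Mx"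
  shows "\<bar>integral\<^sup>L M (bvm_gen N lam th B (indp B)) - real (card B) * (lam - th) * u ^ card B * (1 - u)\<bar>
     \<le> real (card B) * (2 * (lam + th)) * (Mx + 1 / real (N + 1) * real (card B))"
proof -
  define w where "w = 1 / real (N+1)"
  define k where "k = card B"
  define a where "a = 2 * (lam + th)"
  define I where "I C = integral\<^sup>L M (indp C)" for C
  define G where "G C = I C - u ^ card C" for C
  define c where "c = (lam - th) * u ^ k * (1 - u)"
  define T where "T x y = lam * (I (insert y (B - {x})) - I (insert y B)) - th * (I B - I (insert y B)) - c" for x y
  have w0: "0 < w" unfolding w_def by simp
  have xV: "x \<in> tree_vertices N" if "x \<in> B" for x using that B by auto
  have nbs: "(\<Sum>y\<in>tree_neighbors N x. w) = 1" if "x \<in> B" for x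
    using nb_card[OF xV[OF that]] unfolding w_def by simp
  have Mx0: "0 \<le> Mx" using Mb[of B] B by force
  have GB: "\<bar>G C\<bar> \<le> Mx" if "finite C" "C \<subseteq> tree_vertices N" "card C \<le> k + 1" for C
    using Mb[of C] that unfolding G_def I_def k_def by simp
  have eq: "integral\<^sup>L M (bvm_gen N lam th B (indp B)) - real k * (lam - th) * u ^ k * (1 - u)
      = (\<Sum>x\<in>B. \<Sum>y\<in>tree_neighbors N x. w * T x y)"
  proof -
    have "(\<Sum>x\<in>B. \<Sum>y\<in>tree_neighbors N x. w * c) = (\<Sum>x\<in>B. (\<Sum>y\<in>tree_neighbors N x. w) * c)"
      by (simp add: sum_distrib_right mult.assoc)
    also have "\<dots> = real k * c" using nbs by (simp add: k_def)
    finally have e1: "real k * (lam - th) * u ^ k * (1 - u) = (\<Sum>x\<in>B. \<Sum>y\<in>tree_neighbors N x. w * c)"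
      by (simp add: c_def mult.assoc)
    show ?thesis unfolding e1 gen_int[OF M B] T_def I_def w_def
      by (simp add: right_diff_distrib sum_subtractf)
  qed
  have Tb: "\<bar>T x y\<bar> \<le> a * Mx + a * (if y \<in> B then 1 else 0)" if xy: "x \<in> B" "y \<in> tree_neighbors N x" for x y
  proof -
    define C1 where "C1 = insert y (B - {x})"
    define C2 where "C2 = insert y B"
    have yV: "y \<in> tree_vertices N" using nb_sub[OF xV[OF xy(1)]] xy(2) by auto
    have cD: "card (B - {x}) = card B - 1" using xy(1) B(1) by (simp add: card_Diff_singleton)
    have cpos: "card B > 0" using xy(1) B(1) card_gt_0_iff by blast
    have cC1: "card C1 \<le> k" unfolding C1_def k_def using B cD cpos by (simp add: card_insert_if)
    have cC2: "card C2 \<le> k + 1" unfolding C2_def k_def using B card_insert_le_m1 by (simp add: card_insert_if)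
    have g1: "\<bar>G C1\<bar> \<le> Mx" using GB[of C1] cC1 B yV unfolding C1_def by auto
    have g2: "\<bar>G C2\<bar> \<le> Mx" using GB[of C2] cC2 B yV unfolding C2_def by auto
    have g3: "\<bar>G B\<bar> \<le> Mx" using GB[of B] B unfolding k_def by auto
    define \<rho> where "\<rho> = lam * (u ^ card C1 - u ^ card C2) - th * (u ^ k - u ^ card C2) - c"
    have decomp: "T x y = (lam * G C1 - lam * G C2 - th * G B + th * G C2) + \<rho>"
      unfolding T_def \<rho>_def G_def C1_def C2_def k_def by (simp add: algebra_simps)
    have p1: "\<bar>lam * G C1\<bar> \<le> lam * Mx" "\<bar>lam * G C2\<bar> \<le> lam * Mx" "\<bar>th * G B\<bar> \<le> th * Mx" "\<bar>th * G C2\<bar> \<le> th * Mx"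
      using g1 g2 g3 lt by (simp_all add: abs_mult mult_left_mono)
    have r: "\<bar>\<rho>\<bar> \<le> a * (if y \<in> B then 1 else 0)"
    proof (cases "y \<in> B")
      case False
      have k1: "card C1 = k" unfolding C1_def k_def using B xy(1) False
        using cD cpos by (simp add: card_insert_if)
      have k2: "card C2 = k + 1" unfolding C2_def k_def using B False by simp
      have "\<rho> = 0" unfolding \<rho>_def k1 k2 c_def by (simp add: algebra_simps)
      then show ?thesis using False by simp
    next
      case True
      have k2: "card C2 = k" unfolding C2_def k_def using True by (simp add: insert_absorb)
      have b1: "\<bar>u ^ card C1 - u ^ k\<bar> \<le> 1" using pow_diff_le1 u by blast
      have "\<bar>u ^ k * (1 - u)\<bar> \<le> 1" using u by (simp add: abs_mult power_le_one mult_le_one)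
      then have b2: "\<bar>c\<bar> \<le> lam - th" unfolding c_def using lt
        by (simp add: abs_mult mult.assoc mult_left_le)
      have b3: "\<bar>lam * (u ^ card C1 - u ^ k)\<bar> \<le> lam" using b1 lt by (simp add: abs_mult mult_left_le)
      have "\<rho> = lam * (u ^ card C1 - u ^ k) - c" unfolding \<rho>_def k2 by simp
      then have "\<bar>\<rho>\<bar> \<le> lam + (lam - th)" using b2 b3 by linarith
      then show ?thesis using True lt unfolding a_def by simp
    qed
    show ?thesis using decomp p1 r unfolding a_def by (simp add: algebra_simps)
  qed
  have inner: "(\<Sum>y\<in>tree_neighbors N x. \<bar>w * T x y\<bar>) \<le> a * Mx + w * a * real k" if x: "x \<in> B" for x
  proof -
    have fin: "finite (tree_neighbors N x)" using nb_finite xV x by blast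
    have "(\<Sum>y\<in>tree_neighbors N x. \<bar>w * T x y\<bar>) \<le> (\<Sum>y\<in>tree_neighbors N x. w * (a * Mx) + (if y \<in> B then w * a else 0))"
    proof (intro sum_mono)
      fix y assume "y \<in> tree_neighbors N x"
      then have "\<bar>T x y\<bar> \<le> a * Mx + a * (if y \<in> B then 1 else 0)" using Tb x by blast
      then have "w * \<bar>T x y\<bar> \<le> w * (a * Mx + a * (if y \<in> B then 1 else 0))" using w0 by (intro mult_left_mono) auto
      then show "\<bar>w * T x y\<bar> \<le> w * (a * Mx) + (if y \<in> B then w * a else 0)"
        using w0 by (simp add: abs_mult algebra_simps split: if_splits)
    qed
    also have "\<dots> = (\<Sum>y\<in>tree_neighbors N x. w) * (a * Mx) + real (card {y \<in> tree_neighbors N x. y \<in> B}) * (w * a)"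
      using sum.inter_filter[OF fin, of "\<lambda>_. w * a" "\<lambda>y. y \<in> B"]
      by (simp add: sum.distrib sum_distrib_right)
    also have "\<dots> \<le> a * Mx + real k * (w * a)"
    proof -
      have "card {y \<in> tree_neighbors N x. y \<in> B} \<le> k" unfolding k_def using B(1) by (intro card_mono) auto
      then have "real (card {y \<in> tree_neighbors N x. y \<in> B}) * (w * a) \<le> real k * (w * a)"
        using w0 lt unfolding a_def by (intro mult_right_mono) auto
      then show ?thesis using nbs[OF x] by simp
    qed
    finally show ?thesis by (simp add: algebra_simps)
  qed
  have "\<bar>\<Sum>x\<in>B. \<Sum>y\<in>tree_neighbors N x. w * T x y\<bar> \<le> (\<Sum>x\<in>B. \<Sum>y\<in>tree_neighbors N x. \<bar>w * T x y\<bar>)"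
    by (rule order_trans[OF sum_abs sum_mono]) (rule sum_abs)
  also have "\<dots> \<le> (\<Sum>x\<in>B. a * Mx + w * a * real k)"
    by (rule sum_mono) (rule inner)
  also have "\<dots> = real k * a * (Mx + w * real k)" by (simp add: k_def algebra_simps)
  finally show ?thesis using eq unfolding k_def a_def w_def by simp
qed


lemma x_in_tv: "sum_list x < N \<Longrightarrow> x \<in> tree_vertices N"
proof -
  assume N: "sum_list x < N"
  have h: "z < N" if "z \<in> set x" for z using N member_le_sum_list[OF that] by linarith
  show ?thesis unfolding tree_vertices_def
    using h[OF hd_in_set] h[OF nth_mem] by fastforce
qed

theorem theorem2p1:
  fixes lam th p t :: real and \<nu> :: "nat \<Rightarrow> real \<Rightarrow> (nat list \<Rightarrow> bool) measure"
    and x :: "nat list"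
  assumes "0 < th" and "th < lam" and "0 < p" and "p < 1"
    and "\<forall>N\<ge>1. bvm_marginals N lam th p (\<nu> N)"
    and "0 < t"
  shows "(\<lambda>N. measure (\<nu> N t) {\<eta> \<in> space (\<nu> N t). \<eta> x = True})
           \<longlonglongrightarrow> p * exp ((lam - th) * t) / (1 - p + p * exp ((lam - th) * t))"
proof -
  note lt = assms(1,2) and pp = assms(3,4)
  define L where "L s = lg p (lam - th) s" for s
  define a where "a = 2 * (lam + th)"
  define Bs where "Bs N = {B. finite B \<and> B \<subseteq> tree_vertices N}" for N
  define g where "g N B s = integral\<^sup>L (\<nu> N s) (indp B) - L s ^ card B" for N B s
  define g' where "g' N B s = integral\<^sup>L (\<nu> N s) (bvm_gen N lam th B (indp B))
      - real (card B) * (lam - th) * L s ^ card B * (1 - L s)" for N B s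
  define e where "e N = 1 / real (N + 1)" for N :: nat
  have PS: "prob_space (\<nu> N s)" "sets (\<nu> N s) = sets (config_space N)" if "N \<ge> 1" "0 \<le> s" for N s
    using assms(5) that unfolding bvm_marginals_def by auto
  have I0: "\<nu> N 0 = mu_p N p" if "N \<ge> 1" for N
    using assms(5) that unfolding bvm_marginals_def by auto
  have DV: "((\<lambda>s. integral\<^sup>L (\<nu> N s) f) has_real_derivative integral\<^sup>L (\<nu> N s) (bvm_gen N lam th A f)) (at s within {0..})"
    if "N \<ge> 1" "cylinder_fun N A f" "0 \<le> s" for N A f s
    using assms(5) that unfolding bvm_marginals_def by auto
  have L01: "0 \<le> L s" "L s \<le> 1" for s unfolding L_def using lg_01 pp by auto
  have a0: "0 < a" unfolding a_def using lt by simp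
  have e0: "0 \<le> e N" for N unfolding e_def by simp
  have elim: "e \<longlonglongrightarrow> 0"
    using LIMSEQ_inverse_real_of_nat unfolding e_def by (simp add: inverse_eq_divide)
  have bnd1: "\<bar>g N B s\<bar> \<le> 1" if "N \<ge> 1" "B \<in> Bs N" "0 \<le> s" for N B s
  proof -
    have "0 \<le> integral\<^sup>L (\<nu> N s) (indp B)" "integral\<^sup>L (\<nu> N s) (indp B) \<le> 1"
      using indp_int01[OF PS[OF that(1,3)]] that(2) unfolding Bs_def by auto
    moreover have "0 \<le> L s ^ card B" "L s ^ card B \<le> 1" using L01 by (auto simp: power_le_one)
    ultimately show ?thesis unfolding g_def by linarith
  qed
  have der: "(g N B has_real_derivative g' N B s) (at s within {0..})" if "N \<ge> 1" "B \<in> Bs N" "0 \<le> s" for N B s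
  proof -
    have "g N B = (\<lambda>s. integral\<^sup>L (\<nu> N s) (indp B) - lg p (lam - th) s ^ card B)"
      by (rule ext) (simp add: g_def L_def)
    moreover have "((\<lambda>s. integral\<^sup>L (\<nu> N s) (indp B) - lg p (lam - th) s ^ card B) has_real_derivative g' N B s) (at s within {0..})"
      unfolding g'_def L_def
      by (intro DERIV_diff DV lgk_deriv pp that indp_cyl) (use that in \<open>auto simp: Bs_def\<close>)
    ultimately show ?thesis by simp
  qed
  have dbnd: "\<bar>g' N B s\<bar> \<le> real (card B) * a * (M + e N * real (card B))"
    if "N \<ge> 1" "B \<in> Bs N" "0 \<le> s" and Mb: "\<And>B'. B' \<in> Bs N \<Longrightarrow> card B' \<le> card B + 1 \<Longrightarrow> \<bar>g N B' s\<bar> \<le> M"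
    for N B s M
    unfolding g'_def a_def e_def
    apply (rule dbnd_lemma[OF PS[OF that(1,3)] lt L01])
    using that(2) Mb unfolding Bs_def g_def by auto
  have init0: "g N B 0 = 0" if "N \<ge> 1" "B \<in> Bs N" for N B
    using init_mu[of p B N] that pp I0[OF that(1)] unfolding g_def L_def Bs_def by (simp add: lg_0)
  have small: "\<forall>k. \<forall>\<epsilon>>0. eventually (\<lambda>N. \<forall>B\<in>Bs N. card B \<le> k \<longrightarrow> \<bar>g N B t\<bar> \<le> \<epsilon>) sequentially"
    by (rule global_small[where g'=g', OF a0 e0 elim bnd1 der dbnd init0]) (use assms(6) in auto)
  have gl: "(\<lambda>N. g N {x} t) \<longlonglongrightarrow> 0"
    unfolding tendsto_iff
  proof (intro allI impI)
    fix \<epsilon> :: real assume ep: "0 < \<epsilon>"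
    have ev1: "eventually (\<lambda>N. \<forall>B\<in>Bs N. card B \<le> 1 \<longrightarrow> \<bar>g N B t\<bar> \<le> \<epsilon>/2) sequentially"
      using spec[OF spec[OF small, of 1], of "\<epsilon>/2"] ep by (meson half_gt_zero)
    have ev2: "eventually (\<lambda>N. sum_list x < N) sequentially" by (rule eventually_gt_at_top)
    show "eventually (\<lambda>N. dist (g N {x} t) 0 < \<epsilon>) sequentially"
      using ev1 ev2
    proof eventually_elim
      case (elim N)
      then have "{x} \<in> Bs N" using x_in_tv unfolding Bs_def by auto
      then have "\<bar>g N {x} t\<bar> \<le> \<epsilon>/2" using elim by auto
      then show ?case using ep by simp
    qed
  qed
  have lim2: "(\<lambda>N. integral\<^sup>L (\<nu> N t) (indp {x})) \<longlonglongrightarrow> L t"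
  proof -
    have "(\<lambda>N. g N {x} t + L t) \<longlonglongrightarrow> 0 + L t" by (intro tendsto_add gl tendsto_const)
    then show ?thesis unfolding g_def by simp
  qed
  have ev: "eventually (\<lambda>N. integral\<^sup>L (\<nu> N t) (indp {x}) = measure (\<nu> N t) {\<eta> \<in> space (\<nu> N t). \<eta> x = True}) sequentially"
    using eventually_gt_at_top[of "sum_list x + 1"]
  proof eventually_elim
    case (elim N)
    then have "N \<ge> 1" "x \<in> tree_vertices N" using x_in_tv by auto
    then show ?case using final_meas[OF PS[of N t]] assms(6) by simp
  qed
  have "(\<lambda>N. measure (\<nu> N t) {\<eta> \<in> space (\<nu> N t). \<eta> x = True}) \<longlonglongrightarrow> L t"
    using tendsto_cong[OF ev] lim2 by simp
  then show ?thesis unfolding L_def lg_def by simp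
qed


end
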